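(* Let $p$ be an odd prime, $r\ge3$ with $p\nmid r$, $D=\mathrm{D}_{2r}$, and let $G=V\rtimes_\psi D$ with $V=\mathbb{Z}_p^d$ and $\psi:D\to\mathrm{GL}(V)$ irreducible and non-trivial. Let $A=\mathrm{Aut}(G)$, $N=\mathrm{N}_A(D)$, and define the homomorphism $\kappa:N\to\mathrm{Aut}(D)$ by $f\mapsto f|_D$. Then $\ker(\kappa)\cong\mathrm{End}_D(V)^\times$ and $\mathrm{im}(\kappa)=\mathrm{Aut}(D)_\psi$, where $\mathrm{Aut}(D)_\psi=\{\sigma\in\mathrm{Aut}(D):\psi\circ\sigma\cong\psi\}$.
   Context: $V\rtimes_\psi D$ is the semidirect product in which $D$ acts on $V=\mathbb{F}_p^d$ via $\psi$. $\mathrm{N}_A(D)=\{f\in A:f(D)=D\}$. $\mathrm{End}_D(V)$ is the ring of $\mathbb{F}_pD$-module endomorphisms of $V$ and $\mathrm{End}_D(V)^\times$ its unit group. *)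

theory Defs
  imports "HOL-Algebra.Algebra"
begin

text \<open>Element (i, b) stands for rho^i tau^b, where rho is a rotation of order r and
  tau a reflection; tau rho tau = rho^(-1).\<close>
definition dihedral_group :: "nat \<Rightarrow> (nat \<times> bool) monoid" where
  "dihedral_group r =
    \<lparr>carrier = {0..<r} \<times> UNIV,
     Group.monoid.mult = (\<lambda>(i, a) (j, b). (if a then (i + (r - j)) mod r else (i + j) mod r, a \<noteq> b)),
     one = (0, False)\<rparr>"

definition Fp_vec :: "int \<Rightarrow> nat \<Rightarrow> (nat \<Rightarrow> int) set" where
  "Fp_vec p d = {v. \<forall>i. (i < d \<longrightarrow> 0 \<le> v i \<and> v i < p) \<and> (d \<le> i \<longrightarrow> v i = 0)}"

definition vadd :: "int \<Rightarrow> (nat \<Rightarrow> int) \<Rightarrow> (nat \<Rightarrow> int) \<Rightarrow> (nat \<Rightarrow> int)" where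
  "vadd p v w = (\<lambda>i. (v i + w i) mod p)"

definition vsmult :: "int \<Rightarrow> int \<Rightarrow> (nat \<Rightarrow> int) \<Rightarrow> (nat \<Rightarrow> int)" where
  "vsmult p c v = (\<lambda>i. (c * v i) mod p)"

definition vzero :: "nat \<Rightarrow> int" where
  "vzero = (\<lambda>i. 0)"

definition Fp_linear :: "int \<Rightarrow> nat \<Rightarrow> ((nat \<Rightarrow> int) \<Rightarrow> (nat \<Rightarrow> int)) \<Rightarrow> bool" where
  "Fp_linear p d f \<longleftrightarrow>
     f \<in> Fp_vec p d \<rightarrow> Fp_vec p d \<and>
     (\<forall>v \<in> Fp_vec p d. \<forall>w \<in> Fp_vec p d. f (vadd p v w) = vadd p (f v) (f w)) \<and>
     (\<forall>c. \<forall>v \<in> Fp_vec p d. f (vsmult p c v) = vsmult p c (f v))"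

definition GL_group :: "int \<Rightarrow> nat \<Rightarrow> ((nat \<Rightarrow> int) \<Rightarrow> (nat \<Rightarrow> int)) monoid" where
  "GL_group p d = BijGroup (Fp_vec p d) \<lparr>carrier := {f \<in> Bij (Fp_vec p d). Fp_linear p d f}\<rparr>"

definition Fp_subspace :: "int \<Rightarrow> nat \<Rightarrow> (nat \<Rightarrow> int) set \<Rightarrow> bool" where
  "Fp_subspace p d W \<longleftrightarrow> W \<subseteq> Fp_vec p d \<and> vzero \<in> W \<and>
     (\<forall>v \<in> W. \<forall>w \<in> W. vadd p v w \<in> W) \<and> (\<forall>c. \<forall>v \<in> W. vsmult p c v \<in> W)"

definition irreducible_rep ::
  "int \<Rightarrow> nat \<Rightarrow> ('g, 'b) monoid_scheme \<Rightarrow> ('g \<Rightarrow> (nat \<Rightarrow> int) \<Rightarrow> (nat \<Rightarrow> int)) \<Rightarrow> bool" where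
  "irreducible_rep p d D \<psi> \<longleftrightarrow> Fp_vec p d \<noteq> {vzero} \<and>
     (\<forall>W. Fp_subspace p d W \<and> (\<forall>x \<in> carrier D. \<psi> x ` W \<subseteq> W) \<longrightarrow>
          W = {vzero} \<or> W = Fp_vec p d)"

definition trivial_rep ::
  "int \<Rightarrow> nat \<Rightarrow> ('g, 'b) monoid_scheme \<Rightarrow> ('g \<Rightarrow> (nat \<Rightarrow> int) \<Rightarrow> (nat \<Rightarrow> int)) \<Rightarrow> bool" where
  "trivial_rep p d D \<psi> \<longleftrightarrow> (\<forall>x \<in> carrier D. \<psi> x = \<one>\<^bsub>GL_group p d\<^esub>)"

definition rep_iso ::
  "int \<Rightarrow> nat \<Rightarrow> ('g, 'b) monoid_scheme \<Rightarrow> ('g \<Rightarrow> (nat \<Rightarrow> int) \<Rightarrow> (nat \<Rightarrow> int))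
     \<Rightarrow> ('g \<Rightarrow> (nat \<Rightarrow> int) \<Rightarrow> (nat \<Rightarrow> int)) \<Rightarrow> bool" where
  "rep_iso p d D \<rho> \<psi> \<longleftrightarrow> (\<exists>T \<in> carrier (GL_group p d).
      \<forall>x \<in> carrier D. \<forall>v \<in> Fp_vec p d. T (\<rho> x v) = \<psi> x (T v))"

definition End_ring ::
  "int \<Rightarrow> nat \<Rightarrow> ('g, 'b) monoid_scheme \<Rightarrow> ('g \<Rightarrow> (nat \<Rightarrow> int) \<Rightarrow> (nat \<Rightarrow> int))
     \<Rightarrow> ((nat \<Rightarrow> int) \<Rightarrow> (nat \<Rightarrow> int)) ring" where
  "End_ring p d D \<psi> =
    \<lparr>carrier = {f \<in> extensional (Fp_vec p d). Fp_linear p d f \<and>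
                  (\<forall>x \<in> carrier D. \<forall>v \<in> Fp_vec p d. f (\<psi> x v) = \<psi> x (f v))},
     Group.monoid.mult = (\<lambda>f g. compose (Fp_vec p d) f g),
     one = (\<lambda>v \<in> Fp_vec p d. v),
     ring.zero = (\<lambda>v \<in> Fp_vec p d. vzero),
     ring.add = (\<lambda>f g. \<lambda>v \<in> Fp_vec p d. vadd p (f v) (g v))\<rparr>"

definition sdprod ::
  "int \<Rightarrow> nat \<Rightarrow> ('g, 'b) monoid_scheme \<Rightarrow> ('g \<Rightarrow> (nat \<Rightarrow> int) \<Rightarrow> (nat \<Rightarrow> int))
     \<Rightarrow> ((nat \<Rightarrow> int) \<times> 'g) monoid" where
  "sdprod p d D \<psi> =
    \<lparr>carrier = Fp_vec p d \<times> carrier D,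
     Group.monoid.mult = (\<lambda>(v, x) (w, y). (vadd p v (\<psi> x w), x \<otimes>\<^bsub>D\<^esub> y)),
     one = (vzero, \<one>\<^bsub>D\<^esub>)\<rparr>"

definition D_sub :: "('g, 'b) monoid_scheme \<Rightarrow> ((nat \<Rightarrow> int) \<times> 'g) set" where
  "D_sub D = {vzero} \<times> carrier D"

definition normaliser_D ::
  "int \<Rightarrow> nat \<Rightarrow> ('g, 'b) monoid_scheme \<Rightarrow> ('g \<Rightarrow> (nat \<Rightarrow> int) \<Rightarrow> (nat \<Rightarrow> int))
     \<Rightarrow> (((nat \<Rightarrow> int) \<times> 'g) \<Rightarrow> ((nat \<Rightarrow> int) \<times> 'g)) set" where
  "normaliser_D p d D \<psi> = {f \<in> auto (sdprod p d D \<psi>). f ` D_sub D = D_sub D}"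

definition kappa ::
  "('g, 'b) monoid_scheme \<Rightarrow> (((nat \<Rightarrow> int) \<times> 'g) \<Rightarrow> ((nat \<Rightarrow> int) \<times> 'g)) \<Rightarrow> ('g \<Rightarrow> 'g)" where
  "kappa D f = (\<lambda>x \<in> carrier D. snd (f (vzero, x)))"

end

theory Submission
  imports Defs "HOL-Algebra.Multiplicative_Group"
begin

lemma dih_fst_int:
  assumes "j < r"
  shows "int (fst ((i,a) \<otimes>\<^bsub>dihedral_group r\<^esub> (j,b))) = (int i + (if a then - int j else int j)) mod int r"
proof -
  have "(int i + int r - int j) mod int r = (int i - int j) mod int r"
    by (metis add.commute add_diff_eq mod_add_self2)
  then show ?thesis using assms by (auto simp: dihedral_group_def zmod_int of_nat_diff)
qed

lemma dih_snd: "snd ((i,a) \<otimes>\<^bsub>dihedral_group r\<^esub> (j,b)) = (a \<noteq> b)"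
  by (auto simp: dihedral_group_def)

lemma dih_closed: "r > 0 \<Longrightarrow> x \<in> carrier (dihedral_group r) \<Longrightarrow> y \<in> carrier (dihedral_group r)
   \<Longrightarrow> x \<otimes>\<^bsub>dihedral_group r\<^esub> y \<in> carrier (dihedral_group r)"
  by (cases x; cases y) (auto simp: dihedral_group_def)

lemma dih_eqI:
  assumes "r > 0" "x \<in> carrier (dihedral_group r)" "y \<in> carrier (dihedral_group r)"
    "int (fst x) mod int r = int (fst y) mod int r" "snd x = snd y"
  shows "x = y"
proof -
  have "fst x < r" "fst y < r" using assms by (auto simp: dihedral_group_def)
  then have "int (fst x) = int (fst y)" using assms(4) by (simp add: zmod_int)
  then show ?thesis using assms(5) by (simp add: prod_eq_iff)
qed

lemma dihedral_group: assumes "r > 0" shows "group (dihedral_group r)"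
proof (rule groupI)
  let ?D = "dihedral_group r"
  show "\<one>\<^bsub>?D\<^esub> \<in> carrier ?D" using assms by (simp add: dihedral_group_def)
  fix x y z assume x: "x \<in> carrier ?D" and y: "y \<in> carrier ?D" and z: "z \<in> carrier ?D"
  show "x \<otimes>\<^bsub>?D\<^esub> y \<in> carrier ?D" using dih_closed assms x y by blast
  obtain i a where xi: "x = (i,a)" by force
  obtain j b where yj: "y = (j,b)" by force
  obtain k c where zk: "z = (k,c)" by force
  have jr: "j < r" and kr: "k < r" and ir: "i < r" using y z x xi yj zk by (auto simp: dihedral_group_def)
  obtain m e where xy: "x \<otimes>\<^bsub>?D\<^esub> y = (m,e)" by force
  obtain n f where yz: "y \<otimes>\<^bsub>?D\<^esub> z = (n,f)" by force
  have mr: "m < r" "n < r" using dih_closed[OF assms x y] dih_closed[OF assms y z] xy yz by (auto simp: dihedral_group_def)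
  have m: "int m = (int i + (if a then - int j else int j)) mod int r" "e = (a \<noteq> b)"
    using dih_fst_int[OF jr, of i a b] dih_snd[where i=i and a=a and r=r and j=j and b=b] xy xi yj by auto
  have n: "int n = (int j + (if b then - int k else int k)) mod int r" "f = (b \<noteq> c)"
    using dih_fst_int[OF kr, of j b c] dih_snd[where i=j and a=b and r=r and j=k and b=c] yz zk yj by auto
  show "x \<otimes>\<^bsub>?D\<^esub> y \<otimes>\<^bsub>?D\<^esub> z = x \<otimes>\<^bsub>?D\<^esub> (y \<otimes>\<^bsub>?D\<^esub> z)"
  proof (rule dih_eqI[OF assms])
    show "x \<otimes>\<^bsub>?D\<^esub> y \<otimes>\<^bsub>?D\<^esub> z \<in> carrier ?D" "x \<otimes>\<^bsub>?D\<^esub> (y \<otimes>\<^bsub>?D\<^esub> z) \<in> carrier ?D"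
      using dih_closed assms x y z by blast+
    show "snd (x \<otimes>\<^bsub>?D\<^esub> y \<otimes>\<^bsub>?D\<^esub> z) = snd (x \<otimes>\<^bsub>?D\<^esub> (y \<otimes>\<^bsub>?D\<^esub> z))"
      using xy yz m n xi zk by (auto simp: dih_snd)
    have l: "int (fst (x \<otimes>\<^bsub>?D\<^esub> y \<otimes>\<^bsub>?D\<^esub> z)) = (int m + (if e then - int k else int k)) mod int r"
      using dih_fst_int[OF kr, of m e c] xy zk by simp
    have rr: "int (fst (x \<otimes>\<^bsub>?D\<^esub> (y \<otimes>\<^bsub>?D\<^esub> z))) = (int i + (if a then - int n else int n)) mod int r"
      using dih_fst_int[OF mr(2), of i a f] yz xi by simp
    show "int (fst (x \<otimes>\<^bsub>?D\<^esub> y \<otimes>\<^bsub>?D\<^esub> z)) mod int r = int (fst (x \<otimes>\<^bsub>?D\<^esub> (y \<otimes>\<^bsub>?D\<^esub> z))) mod int r"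
      unfolding l rr m n by (cases a; cases b) (simp_all add: mod_simps diff_diff_eq2 add_diff_eq diff_add_eq add.assoc diff_diff_eq)
  qed
  show "\<one>\<^bsub>?D\<^esub> \<otimes>\<^bsub>?D\<^esub> x = x" using x by (auto simp: dihedral_group_def)
  show "\<exists>y\<in>carrier ?D. y \<otimes>\<^bsub>?D\<^esub> x = \<one>\<^bsub>?D\<^esub>"
  proof (cases a)
    case True
    then show ?thesis using x xi by (intro bexI[of _ "(i,True)"]) (auto simp: dihedral_group_def)
  next
    case False
    have ir: "i < r" using x xi by (auto simp: dihedral_group_def)
    have "((r - i) mod r + i) mod r = 0"
      by (metis ir le_add_diff_inverse2 less_imp_le_nat mod_add_left_eq mod_self)
    then show ?thesis using x xi assms False
      by (intro bexI[of _ "((r - i) mod r,False)"]) (auto simp: dihedral_group_def)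
  qed
qed

lemma dihedral_order: "order (dihedral_group r) = 2 * r"
  by (simp add: order_def dihedral_group_def card_cartesian_product)

lemma dih_one: "\<one>\<^bsub>dihedral_group r\<^esub> = (0, False)"
  by (simp add: dihedral_group_def)

locale LS =
  fixes p :: int and d r :: nat and \<psi> :: "nat \<times> bool \<Rightarrow> (nat \<Rightarrow> int) \<Rightarrow> (nat \<Rightarrow> int)"
  assumes p1: "p > 1" and r0: "r > 0" and cop: "coprime (nat p) (2 * r)"
    and psi_hom: "\<psi> \<in> hom (dihedral_group r) (GL_group p d)"
begin

abbreviation "V \<equiv> Fp_vec p d"
abbreviation "D \<equiv> dihedral_group r"
abbreviation "G \<equiv> sdprod p d D \<psi>"
abbreviation "e \<equiv> \<one>\<^bsub>D\<^esub>"

lemma grpD: "group D" using dihedral_group r0 by blast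

definition vneg :: "(nat \<Rightarrow> int) \<Rightarrow> (nat \<Rightarrow> int)" where "vneg v = (\<lambda>i. (- v i) mod p)"

lemma p0: "p > 0" using p1 by simp

lemma vzero_V[simp]: "vzero \<in> V" using p0 by (simp add: Fp_vec_def vzero_def)

lemma vadd_V[simp]: "v \<in> V \<Longrightarrow> w \<in> V \<Longrightarrow> vadd p v w \<in> V"
  using p0 by (simp add: Fp_vec_def vadd_def)

lemma vsmult_V[simp]: "v \<in> V \<Longrightarrow> vsmult p c v \<in> V"
  using p0 by (simp add: Fp_vec_def vsmult_def)

lemma vneg_V[simp]: "v \<in> V \<Longrightarrow> vneg v \<in> V"
  using p0 by (simp add: Fp_vec_def vneg_def)

lemma V_mod: assumes "v \<in> V" shows "(\<lambda>i. v i mod p) = v"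
proof
  fix i show "v i mod p = v i" using assms p0 by (cases "i < d") (auto simp: Fp_vec_def)
qed

lemma vadd_zero_l[simp]: "v \<in> V \<Longrightarrow> vadd p vzero v = v"
  using V_mod by (simp add: vadd_def vzero_def)

lemma vadd_zero_r[simp]: "v \<in> V \<Longrightarrow> vadd p v vzero = v"
  using V_mod by (simp add: vadd_def vzero_def)

lemma vadd_assoc: "vadd p (vadd p a b) c = vadd p a (vadd p b c)"
  by (simp add: vadd_def mod_simps add.assoc)

lemma vadd_comm: "vadd p a b = vadd p b a"
  by (simp add: vadd_def add.commute)

lemma vneg_add: "vadd p (vneg v) v = vzero"
  by (simp add: vadd_def vneg_def vzero_def mod_simps)

lemma vsmult_zero: "vsmult p 0 v = vzero"
  by (simp add: vsmult_def vzero_def)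

lemma vsmult_mod: "vsmult p (c mod p) v = vsmult p c v"
  by (simp add: vsmult_def mod_simps)

lemma vsmult_Suc: "v \<in> V \<Longrightarrow> vsmult p (int (Suc n)) v = vadd p (vsmult p (int n) v) v"
  by (simp add: vsmult_def vadd_def mod_simps algebra_simps)

lemma vsmult_p: "vsmult p p v = vzero"
  by (simp add: vsmult_def vzero_def)

lemma lin_zero: "Fp_linear p d T \<Longrightarrow> T vzero = vzero"
  unfolding Fp_linear_def by (metis vsmult_zero vzero_V)

lemma additive_linear:
  assumes TV: "\<And>v. v \<in> V \<Longrightarrow> T v \<in> V" and T0: "T vzero = vzero"
    and add: "\<And>v w. v \<in> V \<Longrightarrow> w \<in> V \<Longrightarrow> T (vadd p v w) = vadd p (T v) (T w)"
  shows "Fp_linear p d T"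
proof -
  have n: "T (vsmult p (int n) v) = vsmult p (int n) (T v)" if v: "v \<in> V" for n v
  proof (induction n)
    case 0 then show ?case using T0 by (simp add: vsmult_zero)
  next
    case (Suc n)
    have "T (vsmult p (int (Suc n)) v) = T (vadd p (vsmult p (int n) v) v)" by (simp only: vsmult_Suc[OF v])
    also have "\<dots> = vadd p (T (vsmult p (int n) v)) (T v)" using add v by simp
    also have "\<dots> = vsmult p (int (Suc n)) (T v)" by (simp only: Suc.IH vsmult_Suc[OF TV[OF v]])
    finally show ?case .
  qed
  have "T (vsmult p c v) = vsmult p c (T v)" if v: "v \<in> V" for c v
  proof -
    have "c mod p = int (nat (c mod p))" using p0 by simp
    then show ?thesis using n[OF v, of "nat (c mod p)"] by (metis vsmult_mod)
  qed
  then show ?thesis using TV add unfolding Fp_linear_def by auto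
qed

lemma GL_carrier: "carrier (GL_group p d) = {f \<in> Bij V. Fp_linear p d f}"
  by (simp add: GL_group_def BijGroup_def)

lemma GL_mult: "f \<in> Bij V \<Longrightarrow> g \<in> Bij V \<Longrightarrow> f \<otimes>\<^bsub>GL_group p d\<^esub> g = compose V f g"
  by (simp add: GL_group_def BijGroup_def)

lemma psi_GL: "x \<in> carrier D \<Longrightarrow> \<psi> x \<in> Bij V \<and> Fp_linear p d (\<psi> x)"
  using psi_hom by (auto simp: hom_def GL_carrier)

lemma psiV[simp]: assumes "x \<in> carrier D" "v \<in> V" shows "\<psi> x v \<in> V"
proof -
  have "\<psi> x ` V = V" using psi_GL[OF assms(1)] by (simp add: Bij_def bij_betw_def)
  then show ?thesis using assms(2) by blast
qed

lemma psi_add: "x \<in> carrier D \<Longrightarrow> v \<in> V \<Longrightarrow> w \<in> V \<Longrightarrow> \<psi> x (vadd p v w) = vadd p (\<psi> x v) (\<psi> x w)"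
  using psi_GL by (auto simp: Fp_linear_def)

lemma psi_zero[simp]: "x \<in> carrier D \<Longrightarrow> \<psi> x vzero = vzero"
  using psi_GL lin_zero by blast

lemma psi_inj: "x \<in> carrier D \<Longrightarrow> inj_on (\<psi> x) V"
  using psi_GL by (auto simp: Bij_def bij_betw_def)

lemma psi_mult: assumes "x \<in> carrier D" "y \<in> carrier D" "v \<in> V"
  shows "\<psi> (x \<otimes>\<^bsub>D\<^esub> y) v = \<psi> x (\<psi> y v)"
proof -
  have "\<psi> (x \<otimes>\<^bsub>D\<^esub> y) = \<psi> x \<otimes>\<^bsub>GL_group p d\<^esub> \<psi> y" using psi_hom assms by (auto simp: hom_def)
  also have "\<dots> = compose V (\<psi> x) (\<psi> y)" using GL_mult psi_GL assms by blast
  finally show ?thesis using assms by (simp add: compose_def)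
qed

lemma psi_one[simp]: assumes "v \<in> V" shows "\<psi> e v = v"
proof -
  have e: "e \<in> carrier D" using grpD by (simp add: group.is_monoid monoid.one_closed)
  have "\<psi> e (\<psi> e v) = \<psi> e v" using psi_mult[OF e e assms] grpD e by (simp add: group.is_monoid monoid.l_one)
  then show ?thesis using psi_inj[OF e] assms e by (meson inj_onD psiV)
qed

lemma e_carr[simp]: "e \<in> carrier D" using grpD by (simp add: group.is_monoid monoid.one_closed)

lemma G_carrier: "carrier G = V \<times> carrier D" by (simp add: sdprod_def)
lemma G_mult: "(v,x) \<otimes>\<^bsub>G\<^esub> (w,y) = (vadd p v (\<psi> x w), x \<otimes>\<^bsub>D\<^esub> y)" by (simp add: sdprod_def)
lemma G_one: "\<one>\<^bsub>G\<^esub> = (vzero, e)" by (simp add: sdprod_def)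

lemma grpG: "group G"
proof (rule groupI)
  show "\<one>\<^bsub>G\<^esub> \<in> carrier G" by (simp add: G_one G_carrier)
  fix a b c assume a: "a \<in> carrier G" and b: "b \<in> carrier G" and c: "c \<in> carrier G"
  obtain v x where a': "a = (v,x)" using prod.exhaust by blast
  obtain w y where b': "b = (w,y)" using prod.exhaust by blast
  obtain u z where c': "c = (u,z)" using prod.exhaust by blast
  have vx: "v \<in> V" "x \<in> carrier D" using a a' by (auto simp: G_carrier)
  have wy: "w \<in> V" "y \<in> carrier D" using b b' by (auto simp: G_carrier)
  have uz: "u \<in> V" "z \<in> carrier D" using c c' by (auto simp: G_carrier)
  show "a \<otimes>\<^bsub>G\<^esub> b \<in> carrier G" using vx wy a' b' grpD by (simp add: G_mult G_carrier group.is_monoid monoid.m_closed)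
  show "a \<otimes>\<^bsub>G\<^esub> b \<otimes>\<^bsub>G\<^esub> c = a \<otimes>\<^bsub>G\<^esub> (b \<otimes>\<^bsub>G\<^esub> c)"
    using vx wy uz a' b' c' grpD
    by (simp add: G_mult psi_mult psi_add vadd_assoc group.is_monoid monoid.m_assoc)
  show "\<one>\<^bsub>G\<^esub> \<otimes>\<^bsub>G\<^esub> a = a" using vx a' grpD by (simp add: G_one G_mult group.is_monoid monoid.l_one)
  show "\<exists>b\<in>carrier G. b \<otimes>\<^bsub>G\<^esub> a = \<one>\<^bsub>G\<^esub>"
  proof (intro bexI)
    let ?x = "inv\<^bsub>D\<^esub> x"
    have ix: "?x \<in> carrier D" "?x \<otimes>\<^bsub>D\<^esub> x = e" using grpD vx by (auto simp: group.l_inv group.inv_closed)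
    show "(\<psi> ?x (vneg v), ?x) \<otimes>\<^bsub>G\<^esub> a = \<one>\<^bsub>G\<^esub>"
      using a' ix vx by (simp add: G_mult G_one psi_add[symmetric] vneg_add)
    show "(\<psi> ?x (vneg v), ?x) \<in> carrier G" using ix vx by (simp add: G_carrier)
  qed
qed


lemma G_mult_snd: "snd (a \<otimes>\<^bsub>G\<^esub> b) = snd a \<otimes>\<^bsub>D\<^esub> snd b"
  by (cases a; cases b) (simp add: G_mult)

lemma G_mult_fst: "fst (a \<otimes>\<^bsub>G\<^esub> b) = vadd p (fst a) (\<psi> (snd a) (fst b))"
  by (cases a; cases b) (simp add: G_mult)

lemma ee[simp]: "e \<otimes>\<^bsub>D\<^esub> e = e" using grpD by (simp add: group.is_monoid monoid.l_one)

lemma pow_V: "v \<in> V \<Longrightarrow> (v,e) [^]\<^bsub>G\<^esub> n = (vsmult p (int n) v, e)"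
proof (induction n)
  case 0 then show ?case by (simp add: G_one vsmult_zero)
next
  case (Suc n)
  have "vadd p (vsmult p (int n) v) v = vsmult p (1 + int n) v" using vsmult_Suc[OF Suc.prems, of n] by simp
  with Suc show ?case by (simp add: G_mult)
qed

lemma snd_pow: "snd (z [^]\<^bsub>G\<^esub> (n::nat)) = snd z [^]\<^bsub>D\<^esub> n"
  by (induction n) (simp_all add: G_one G_mult_snd)

lemma auto_hom: "f \<in> auto G \<Longrightarrow> f \<in> hom G G" by (simp add: auto_def)

lemma auto_one: "f \<in> auto G \<Longrightarrow> f (vzero, e) = (vzero, e)"
  using hom_one[OF auto_hom grpG grpG] by (simp add: G_one)

lemma key_e:
  assumes f: "f \<in> auto G" and v: "v \<in> V"
  shows "snd (f (v,e)) = e"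
proof -
  have ve: "(v,e) \<in> carrier G" using v by (simp add: G_carrier)
  have fve: "f (v,e) \<in> carrier G" using auto_hom[OF f] ve by (auto simp: hom_def)
  define y where "y = snd (f (v,e))"
  have y: "y \<in> carrier D" using fve by (auto simp: y_def G_carrier)
  have "(v,e) [^]\<^bsub>G\<^esub> nat p = (vsmult p (int (nat p)) v, e)" by (rule pow_V[OF v])
  then have "(v,e) [^]\<^bsub>G\<^esub> nat p = \<one>\<^bsub>G\<^esub>" using p0 by (simp add: vsmult_p G_one)
  moreover have "f ((v,e) [^]\<^bsub>G\<^esub> nat p) = f (v,e) [^]\<^bsub>G\<^esub> nat p"
    using hom_nat_pow[OF auto_hom[OF f] ve grpG grpG] by blast
  ultimately have "f (v,e) [^]\<^bsub>G\<^esub> nat p = \<one>\<^bsub>G\<^esub>"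
    using auto_one[OF f] by (simp add: G_one)
  then have "y [^]\<^bsub>D\<^esub> nat p = e" using snd_pow[of "f (v,e)" "nat p"] by (simp add: y_def G_one)
  then have d1: "group.ord D y dvd nat p" using group.pow_eq_id[OF grpD y] by simp
  have "y [^]\<^bsub>D\<^esub> (2 * r) = e" using group.pow_order_eq_1[OF grpD y] by (simp add: dihedral_order)
  then have d2: "group.ord D y dvd 2 * r" using group.pow_eq_id[OF grpD y] by simp
  have "group.ord D y = 1" using coprime_common_divisor_nat[OF cop d1 d2] .
  then have "y [^]\<^bsub>D\<^esub> (1::nat) = e" using group.pow_eq_id[OF grpD y, of 1] by simp
  then have "y = e" using y grpD by (simp add: group.is_monoid monoid.l_one)
  then show ?thesis by (simp add: y_def)
qed

definition sig :: "(((nat \<Rightarrow> int) \<times> (nat \<times> bool)) \<Rightarrow> ((nat \<Rightarrow> int) \<times> (nat \<times> bool))) \<Rightarrow> nat \<times> bool \<Rightarrow> nat \<times> bool"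
  where "sig f x = snd (f (vzero, x))"
definition Tf :: "(((nat \<Rightarrow> int) \<times> (nat \<times> bool)) \<Rightarrow> ((nat \<Rightarrow> int) \<times> (nat \<times> bool))) \<Rightarrow> (nat \<Rightarrow> int) \<Rightarrow> (nat \<Rightarrow> int)"
  where "Tf f v = fst (f (v, e))"

context
  fixes f assumes fN: "f \<in> normaliser_D p d D \<psi>"
begin

lemma fA: "f \<in> auto G" using fN by (simp add: normaliser_D_def)
lemma fhom: "f \<in> hom G G" using fA by (simp add: auto_def)
lemma fbij: "bij_betw f (carrier G) (carrier G)" using fA by (simp add: auto_def Bij_def)
lemma fext: "f \<in> extensional (carrier G)" using fA by (simp add: auto_def Bij_def)
lemma fmult: "a \<in> carrier G \<Longrightarrow> b \<in> carrier G \<Longrightarrow> f (a \<otimes>\<^bsub>G\<^esub> b) = f a \<otimes>\<^bsub>G\<^esub> f b"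
  using fhom by (simp add: hom_def)

lemma K1: assumes x: "x \<in> carrier D" shows "f (vzero, x) = (vzero, sig f x)" "sig f x \<in> carrier D"
proof -
  have "(vzero, x) \<in> D_sub D" using x by (simp add: D_sub_def)
  then have "f (vzero, x) \<in> D_sub D" using fN by (auto simp: normaliser_D_def)
  then show "f (vzero, x) = (vzero, sig f x)" "sig f x \<in> carrier D" by (auto simp: D_sub_def sig_def)
qed

lemma K2: assumes v: "v \<in> V" shows "f (v, e) = (Tf f v, e)" "Tf f v \<in> V"
proof -
  have "f (v,e) \<in> carrier G" using hom_in_carrier[OF fhom] v by (simp add: G_carrier)
  then show "f (v, e) = (Tf f v, e)" "Tf f v \<in> V" using key_e[OF fA v]
    by (auto simp: Tf_def G_carrier prod_eq_iff)
qed

lemma sig_e: "sig f e = e" using auto_one[OF fA] by (simp add: sig_def)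
lemma T0: "Tf f vzero = vzero" using auto_one[OF fA] by (simp add: Tf_def)

lemma K3: assumes v: "v \<in> V" and x: "x \<in> carrier D" shows "f (v, x) = (Tf f v, sig f x)"
proof -
  have "(v, x) = (v,e) \<otimes>\<^bsub>G\<^esub> (vzero, x)" using v x grpD by (simp add: G_mult group.is_monoid monoid.l_one)
  then have "f (v,x) = f (v,e) \<otimes>\<^bsub>G\<^esub> f (vzero, x)" using fmult v x by (simp add: G_carrier)
  also have "\<dots> = (Tf f v, sig f x)" using K1[OF x] K2[OF v] grpD by (simp add: G_mult group.is_monoid monoid.l_one)
  finally show ?thesis .
qed

lemma sig_inj: assumes "x \<in> carrier D" "y \<in> carrier D" "sig f x = sig f y" shows "x = y"
proof -
  have "f (vzero, x) = f (vzero, y)" using K1 assms by simp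
  then have "(vzero, x) = (vzero, y)"
    by (rule inj_onD[OF bij_betw_imp_inj_on[OF fbij]]) (simp_all add: G_carrier assms)
  then show ?thesis by simp
qed

lemma T_inj: assumes "v \<in> V" "w \<in> V" "Tf f v = Tf f w" shows "v = w"
proof -
  have "f (v, e) = f (w, e)" using K2 assms by simp
  then have "(v, e) = (w, e)"
    by (rule inj_onD[OF bij_betw_imp_inj_on[OF fbij]]) (simp_all add: G_carrier assms)
  then show ?thesis by simp
qed

lemma T_surj: assumes w: "w \<in> V" shows "\<exists>u \<in> V. Tf f u = w"
proof -
  have "(w,e) \<in> f ` carrier G" using fbij w by (simp add: bij_betw_def G_carrier)
  then obtain u z where uz: "u \<in> V" "z \<in> carrier D" "(w,e) = f (u,z)" by (auto simp: G_carrier)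
  then have "sig f z = sig f e" using K3 sig_e by simp
  then have "z = e" using sig_inj uz by simp
  then show ?thesis using uz K3 by auto
qed

lemma sig_surj: assumes y: "y \<in> carrier D" shows "\<exists>z \<in> carrier D. sig f z = y"
proof -
  have "(vzero,y) \<in> f ` D_sub D" using fN y by (simp add: normaliser_D_def D_sub_def)
  then show ?thesis using K1 by (auto simp: D_sub_def)
qed

lemma K4: assumes v: "v \<in> V" "w \<in> V" and x: "x \<in> carrier D" "y \<in> carrier D"
  shows "Tf f (vadd p v (\<psi> x w)) = vadd p (Tf f v) (\<psi> (sig f x) (Tf f w))"
    "sig f (x \<otimes>\<^bsub>D\<^esub> y) = sig f x \<otimes>\<^bsub>D\<^esub> sig f y"
proof -
  have m: "(v,x) \<otimes>\<^bsub>G\<^esub> (w,y) = (vadd p v (\<psi> x w), x \<otimes>\<^bsub>D\<^esub> y)" by (simp add: G_mult)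
  have c: "vadd p v (\<psi> x w) \<in> V" "x \<otimes>\<^bsub>D\<^esub> y \<in> carrier D" using assms grpD by (auto simp: group.is_monoid monoid.m_closed)
  have "f ((v,x) \<otimes>\<^bsub>G\<^esub> (w,y)) = f (v,x) \<otimes>\<^bsub>G\<^esub> f (w,y)" using fmult assms by (simp add: G_carrier)
  then have "(Tf f (vadd p v (\<psi> x w)), sig f (x \<otimes>\<^bsub>D\<^esub> y)) = (vadd p (Tf f v) (\<psi> (sig f x) (Tf f w)), sig f x \<otimes>\<^bsub>D\<^esub> sig f y)"
    using K3 assms c m by (simp add: G_mult)
  then show "Tf f (vadd p v (\<psi> x w)) = vadd p (Tf f v) (\<psi> (sig f x) (Tf f w))"
    "sig f (x \<otimes>\<^bsub>D\<^esub> y) = sig f x \<otimes>\<^bsub>D\<^esub> sig f y" by auto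
qed

lemma T_add: "v \<in> V \<Longrightarrow> w \<in> V \<Longrightarrow> Tf f (vadd p v w) = vadd p (Tf f v) (Tf f w)"
  using K4(1)[of v w e e] sig_e K2(2)[of w] by simp

lemma T_comm: "w \<in> V \<Longrightarrow> x \<in> carrier D \<Longrightarrow> Tf f (\<psi> x w) = \<psi> (sig f x) (Tf f w)"
  using K4(1)[of vzero w x] T0 K2 K1 by simp

lemma T_lin: "Fp_linear p d (Tf f)"
  using additive_linear[of "Tf f"] K2 T0 T_add by blast

lemma T_bij: "bij_betw (Tf f) V V"
  unfolding bij_betw_def inj_on_def using T_inj K2 T_surj by blast

end


definition linv :: "((nat \<Rightarrow> int) \<Rightarrow> (nat \<Rightarrow> int)) \<Rightarrow> (nat \<Rightarrow> int) \<Rightarrow> (nat \<Rightarrow> int)"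
  where "linv T = restrict (inv_into V T) V"

context
  fixes T assumes Tb: "bij_betw T V V" and Tl: "Fp_linear p d T"
begin

lemma linv_V: "v \<in> V \<Longrightarrow> linv T v \<in> V"
  using Tb by (simp add: linv_def bij_betw_def inv_into_into)

lemma linv_l: "v \<in> V \<Longrightarrow> linv T (T v) = v"
  using Tb by (auto simp: linv_def bij_betw_def)

lemma linv_r: "v \<in> V \<Longrightarrow> T (linv T v) = v"
  using Tb by (auto simp: linv_def bij_betw_def f_inv_into_f)

lemma TV: "v \<in> V \<Longrightarrow> T v \<in> V" using Tb by (auto simp: bij_betw_def)

lemma linv_Bij: "linv T \<in> Bij V"
proof -
  have "bij_betw (inv_into V T) V V" using Tb by (rule bij_betw_inv_into)
  then have "bij_betw (linv T) V V" unfolding linv_def by (rule bij_betw_cong[THEN iffD1, rotated]) simp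
  then show ?thesis by (simp add: Bij_def linv_def)
qed

lemma linv_lin: "Fp_linear p d (linv T)"
proof -
  have a: "linv T (vadd p v w) = vadd p (linv T v) (linv T w)" if "v \<in> V" "w \<in> V" for v w
  proof -
    have "T (vadd p (linv T v) (linv T w)) = vadd p v w"
      using Tl that linv_V linv_r by (simp add: Fp_linear_def)
    then show ?thesis using linv_l that linv_V by (metis vadd_V)
  qed
  have m: "linv T (vsmult p c v) = vsmult p c (linv T v)" if "v \<in> V" for c v
  proof -
    have "T (vsmult p c (linv T v)) = vsmult p c v"
      using Tl that linv_V linv_r by (simp add: Fp_linear_def)
    then show ?thesis using linv_l that linv_V by (metis vsmult_V)
  qed
  show ?thesis using a m linv_V unfolding Fp_linear_def by auto
qed

end

lemma lin_restrict: "Fp_linear p d T \<Longrightarrow> Fp_linear p d (restrict T V)"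
  by (simp add: Fp_linear_def Pi_def)

definition mkf :: "((nat \<Rightarrow> int) \<Rightarrow> (nat \<Rightarrow> int)) \<Rightarrow> (nat \<times> bool \<Rightarrow> nat \<times> bool) \<Rightarrow> ((nat \<Rightarrow> int) \<times> (nat \<times> bool)) \<Rightarrow> ((nat \<Rightarrow> int) \<times> (nat \<times> bool))"
  where "mkf S \<sigma> = (\<lambda>z \<in> carrier G. (S (fst z), \<sigma> (snd z)))"

context
  fixes S \<sigma> assumes Sb: "bij_betw S V V" and Sl: "Fp_linear p d S" and sA: "\<sigma> \<in> auto D"
    and Sc: "\<And>x w. x \<in> carrier D \<Longrightarrow> w \<in> V \<Longrightarrow> S (\<psi> x w) = \<psi> (\<sigma> x) (S w)"
begin

lemma sbij: "bij_betw \<sigma> (carrier D) (carrier D)" using sA by (simp add: auto_def Bij_def)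
lemma shom: "\<sigma> \<in> hom D D" using sA by (simp add: auto_def)
lemma sext: "\<sigma> \<in> extensional (carrier D)" using sA by (simp add: auto_def Bij_def)
lemma SV: "v \<in> V \<Longrightarrow> S v \<in> V" using Sb by (auto simp: bij_betw_def)
lemma sD: "x \<in> carrier D \<Longrightarrow> \<sigma> x \<in> carrier D" using shom by (simp add: hom_in_carrier)

lemma mkf_hom: "mkf S \<sigma> \<in> hom G G"
proof (rule homI)
  fix a assume "a \<in> carrier G" then show "mkf S \<sigma> a \<in> carrier G"
    by (auto simp: mkf_def G_carrier SV sD)
next
  fix a b assume a: "a \<in> carrier G" and b: "b \<in> carrier G"
  obtain v x where a': "a = (v,x)" using prod.exhaust by blast
  obtain w y where b': "b = (w,y)" using prod.exhaust by blast
  have vx: "v \<in> V" "x \<in> carrier D" "w \<in> V" "y \<in> carrier D" using a b a' b' by (auto simp: G_carrier)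
  have ab: "a \<otimes>\<^bsub>G\<^esub> b \<in> carrier G" using a b grpG by (simp add: group.is_monoid monoid.m_closed)
  have "S (vadd p v (\<psi> x w)) = vadd p (S v) (\<psi> (\<sigma> x) (S w))"
    using Sl vx Sc by (simp add: Fp_linear_def)
  moreover have "\<sigma> (x \<otimes>\<^bsub>D\<^esub> y) = \<sigma> x \<otimes>\<^bsub>D\<^esub> \<sigma> y" using shom vx by (simp add: hom_def)
  moreover have "mkf S \<sigma> a = (S v, \<sigma> x)" "mkf S \<sigma> b = (S w, \<sigma> y)"
    using a b unfolding a' b' mkf_def by simp_all
  moreover have "mkf S \<sigma> (a \<otimes>\<^bsub>G\<^esub> b) = (S (vadd p v (\<psi> x w)), \<sigma> (x \<otimes>\<^bsub>D\<^esub> y))"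
    using ab unfolding a' b' mkf_def by (simp add: G_mult)
  ultimately show "mkf S \<sigma> (a \<otimes>\<^bsub>G\<^esub> b) = mkf S \<sigma> a \<otimes>\<^bsub>G\<^esub> mkf S \<sigma> b"
    by (simp add: G_mult)
qed

lemma mkf_bij: "bij_betw (mkf S \<sigma>) (carrier G) (carrier G)"
proof -
  have "bij_betw (\<lambda>z. (S (fst z), \<sigma> (snd z))) (V \<times> carrier D) (V \<times> carrier D)"
    using bij_betw_map_prod[OF Sb sbij] by (simp add: map_prod_def case_prod_unfold)
  then show ?thesis unfolding mkf_def G_carrier by (rule bij_betw_cong[THEN iffD1, rotated]) simp
qed

lemma mkf_N: "mkf S \<sigma> \<in> normaliser_D p d D \<psi>"
proof -
  have "mkf S \<sigma> \<in> auto G" using mkf_hom mkf_bij by (simp add: auto_def Bij_def mkf_def)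
  moreover have "mkf S \<sigma> ` D_sub D = D_sub D"
  proof -
    have S0: "S vzero = vzero" using Sl lin_zero by blast
    have e1: "D_sub D = (\<lambda>x. (vzero, x)) ` carrier D" by (auto simp: D_sub_def)
    have "mkf S \<sigma> ` D_sub D = (\<lambda>x. mkf S \<sigma> (vzero, x)) ` carrier D" unfolding e1 image_image ..
    also have "\<dots> = (\<lambda>x. (vzero, \<sigma> x)) ` carrier D"
      by (rule image_cong) (simp_all add: mkf_def G_carrier S0)
    also have "\<dots> = {vzero} \<times> \<sigma> ` carrier D" by auto
    also have "\<dots> = D_sub D" using sbij by (simp add: bij_betw_def D_sub_def)
    finally show ?thesis .
  qed
  ultimately show ?thesis by (simp add: normaliser_D_def)
qed

lemma mkf_kappa: "kappa D (mkf S \<sigma>) = \<sigma>"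
proof
  fix x show "kappa D (mkf S \<sigma>) x = \<sigma> x"
  proof (cases "x \<in> carrier D")
    case True then show ?thesis by (simp add: kappa_def mkf_def G_carrier)
  next
    case False then show ?thesis using sext extensional_arb[OF sext False] by (simp add: kappa_def)
  qed
qed

lemma mkf_Tf: "v \<in> V \<Longrightarrow> Tf (mkf S \<sigma>) v = S v"
  by (simp add: Tf_def mkf_def G_carrier)

end


lemma kappa_sig: "kappa D f = restrict (sig f) (carrier D)"
  unfolding kappa_def sig_def by (rule restrict_ext) simp

lemma image_part: "kappa D ` normaliser_D p d D \<psi> = {\<sigma> \<in> auto D. rep_iso p d D (\<psi> \<circ> \<sigma>) \<psi>}"
proof (intro equalityI subsetI)
  fix k assume "k \<in> kappa D ` normaliser_D p d D \<psi>"
  then obtain f where fN: "f \<in> normaliser_D p d D \<psi>" and k: "k = kappa D f" by blast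
  have kx: "x \<in> carrier D \<Longrightarrow> k x = sig f x" for x by (simp add: k kappa_sig)
  have "k \<in> hom D D"
  proof (rule homI)
    fix x assume "x \<in> carrier D" then show "k x \<in> carrier D" using K1(2)[OF fN] kx by simp
  next
    fix x y assume "x \<in> carrier D" "y \<in> carrier D"
    then show "k (x \<otimes>\<^bsub>D\<^esub> y) = k x \<otimes>\<^bsub>D\<^esub> k y" using kx K4(2)[OF fN, of vzero vzero x y] grpD
      by (simp add: group.is_monoid monoid.m_closed)
  qed
  moreover have "bij_betw k (carrier D) (carrier D)"
  proof -
    have "bij_betw (sig f) (carrier D) (carrier D)"
      unfolding bij_betw_def inj_on_def using sig_inj[OF fN] K1(2)[OF fN] sig_surj[OF fN] by blast
    then show ?thesis by (rule bij_betw_cong[THEN iffD1, rotated]) (simp add: kx)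
  qed
  moreover have "k \<in> extensional (carrier D)" by (simp add: k kappa_sig)
  ultimately have kA: "k \<in> auto D" by (simp add: auto_def Bij_def)
  have Tb: "bij_betw (Tf f) V V" and Tl: "Fp_linear p d (Tf f)" using T_bij[OF fN] T_lin[OF fN] by auto
  have "rep_iso p d D (\<psi> \<circ> k) \<psi>"
    unfolding rep_iso_def
  proof (intro bexI ballI)
    show "linv (Tf f) \<in> carrier (GL_group p d)" using linv_Bij[OF Tb Tl] linv_lin[OF Tb Tl] by (simp add: GL_carrier)
    fix x v assume x: "x \<in> carrier D" and v: "v \<in> V"
    define u where "u = linv (Tf f) v"
    have u: "u \<in> V" "Tf f u = v" using linv_V[OF Tb Tl v] linv_r[OF Tb Tl v] by (auto simp: u_def)
    have "(\<psi> \<circ> k) x v = Tf f (\<psi> x u)" using T_comm[OF fN u(1) x] u kx[OF x] by simp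
    then show "linv (Tf f) ((\<psi> \<circ> k) x v) = \<psi> x (linv (Tf f) v)"
      using linv_l[OF Tb Tl] u x by (simp add: u_def[symmetric])
  qed
  then show "k \<in> {\<sigma> \<in> auto D. rep_iso p d D (\<psi> \<circ> \<sigma>) \<psi>}" using kA by simp
next
  fix \<sigma> assume "\<sigma> \<in> {\<sigma> \<in> auto D. rep_iso p d D (\<psi> \<circ> \<sigma>) \<psi>}"
  then have sA: "\<sigma> \<in> auto D" and "rep_iso p d D (\<psi> \<circ> \<sigma>) \<psi>" by auto
  then obtain T where T: "T \<in> carrier (GL_group p d)"
    and Tc: "\<And>x v. x \<in> carrier D \<Longrightarrow> v \<in> V \<Longrightarrow> T (\<psi> (\<sigma> x) v) = \<psi> x (T v)"
    unfolding rep_iso_def by auto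
  have Tb: "bij_betw T V V" and Tl: "Fp_linear p d T" using T by (auto simp: GL_carrier Bij_def)
  let ?S = "linv T"
  have Sb: "bij_betw ?S V V" using linv_Bij[OF Tb Tl] by (simp add: Bij_def)
  have Sl: "Fp_linear p d ?S" using linv_lin[OF Tb Tl] .
  have sD: "x \<in> carrier D \<Longrightarrow> \<sigma> x \<in> carrier D" for x using sA hom_in_carrier[of \<sigma> D D x] by (simp add: auto_def)
  have Sc: "?S (\<psi> x w) = \<psi> (\<sigma> x) (?S w)" if x: "x \<in> carrier D" and w: "w \<in> V" for x w
  proof -
    define u where "u = ?S w"
    have u: "u \<in> V" "T u = w" using linv_V[OF Tb Tl w] linv_r[OF Tb Tl w] by (auto simp: u_def)
    have "\<psi> x w = T (\<psi> (\<sigma> x) u)" using Tc[OF x u(1)] u by simp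
    then show ?thesis using linv_l[OF Tb Tl] u x sD by (simp add: u_def[symmetric])
  qed
  have "mkf ?S \<sigma> \<in> normaliser_D p d D \<psi>" using mkf_N[OF Sb Sl sA Sc] by blast
  moreover have "kappa D (mkf ?S \<sigma>) = \<sigma>" using mkf_kappa[OF Sb Sl sA Sc] by blast
  ultimately show "\<sigma> \<in> kappa D ` normaliser_D p d D \<psi>" by (metis image_eqI)
qed


lemma AutoD_one: "\<one>\<^bsub>AutoGroup D\<^esub> = (\<lambda>x\<in>carrier D. x)"
  by (simp add: AutoGroup_def BijGroup_def)

lemma E_carrier: "carrier (End_ring p d D \<psi>) = {f \<in> extensional V. Fp_linear p d f \<and>
                  (\<forall>x \<in> carrier D. \<forall>v \<in> V. f (\<psi> x v) = \<psi> x (f v))}"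
  by (simp add: End_ring_def)
lemma E_mult: "f \<otimes>\<^bsub>End_ring p d D \<psi>\<^esub> g = compose V f g" by (simp add: End_ring_def)
lemma E_one: "\<one>\<^bsub>End_ring p d D \<psi>\<^esub> = (\<lambda>v\<in>V. v)" by (simp add: End_ring_def)

definition Kset where "Kset = {f \<in> normaliser_D p d D \<psi>. kappa D f = \<one>\<^bsub>AutoGroup D\<^esub>}"

lemma K_sig: assumes "f \<in> Kset" "x \<in> carrier D" shows "sig f x = x"
proof -
  have "restrict (sig f) (carrier D) x = (\<lambda>x\<in>carrier D. x) x"
    using assms(1) by (simp add: Kset_def kappa_sig AutoD_one)
  then show ?thesis using assms(2) by simp
qed

lemma K_N: "f \<in> Kset \<Longrightarrow> f \<in> normaliser_D p d D \<psi>" by (simp add: Kset_def)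

definition Phi where "Phi f = restrict (Tf f) V"

lemma Phi_E: assumes f: "f \<in> Kset" shows "Phi f \<in> Units (End_ring p d D \<psi>)"
proof -
  have fN: "f \<in> normaliser_D p d D \<psi>" using f by (simp add: Kset_def)
  have Tb: "bij_betw (Tf f) V V" and Tl: "Fp_linear p d (Tf f)" using T_bij[OF fN] T_lin[OF fN] by auto
  have c1: "Phi f \<in> carrier (End_ring p d D \<psi>)"
    using lin_restrict[OF Tl] T_comm[OF fN] K_sig[OF f] by (simp add: E_carrier Phi_def)
  have c2: "linv (Tf f) \<in> carrier (End_ring p d D \<psi>)"
  proof -
    have "linv (Tf f) (\<psi> x v) = \<psi> x (linv (Tf f) v)" if x: "x \<in> carrier D" and v: "v \<in> V" for x v
    proof -
      define u where "u = linv (Tf f) v"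
      have u: "u \<in> V" "Tf f u = v" using linv_V[OF Tb Tl v] linv_r[OF Tb Tl v] by (auto simp: u_def)
      have "\<psi> x v = Tf f (\<psi> x u)" using T_comm[OF fN u(1) x] u K_sig[OF f x] by simp
      then show ?thesis using linv_l[OF Tb Tl] u x by (simp add: u_def[symmetric])
    qed
    then show ?thesis using linv_lin[OF Tb Tl] by (simp add: E_carrier linv_def)
  qed
  have "compose V (linv (Tf f)) (Phi f) = (\<lambda>v\<in>V. v)"
    unfolding compose_def by (rule restrict_ext) (simp add: Phi_def linv_l[OF Tb Tl])
  moreover have "compose V (Phi f) (linv (Tf f)) = (\<lambda>v\<in>V. v)"
    unfolding compose_def by (rule restrict_ext) (simp add: Phi_def linv_r[OF Tb Tl] linv_V[OF Tb Tl])
  ultimately show ?thesis using c1 c2 unfolding Units_def by (auto simp: E_mult E_one)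
qed

lemma kernel_part:
  "(AutoGroup G)\<lparr>carrier := Kset\<rparr> \<cong> units_of (End_ring p d D \<psi>)"
proof (rule is_isoI)
  let ?H = "(AutoGroup G)\<lparr>carrier := Kset\<rparr>"
  let ?U = "units_of (End_ring p d D \<psi>)"
  have Hmult: "f \<otimes>\<^bsub>?H\<^esub> g = compose (carrier G) f g" if "f \<in> Kset" "g \<in> Kset" for f g
  proof -
    have "f \<in> Bij (carrier G)" "g \<in> Bij (carrier G)" using that fA[OF K_N] by (auto simp: auto_def)
    then show ?thesis by (simp add: AutoGroup_def BijGroup_def)
  qed
  have hom: "Phi \<in> hom ?H ?U"
  proof (rule homI)
    fix f assume "f \<in> carrier ?H" then show "Phi f \<in> carrier ?U" using Phi_E by (simp add: units_of_def)
  next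
    fix f g assume f: "f \<in> carrier ?H" and g: "g \<in> carrier ?H"
    then have f': "f \<in> Kset" and g': "g \<in> Kset" by auto
    have "Phi (compose (carrier G) f g) = compose V (Phi f) (Phi g)"
      unfolding Phi_def compose_def[of V]
    proof (rule restrict_ext)
      fix v assume v: "v \<in> V"
      have "compose (carrier G) f g (v, e) = f (g (v, e))" using v by (simp add: compose_def G_carrier)
      also have "\<dots> = (Tf f (Tf g v), e)" using K2[OF K_N[OF g'] v] K2[OF K_N[OF f'] K2(2)[OF K_N[OF g'] v]] by simp
      finally show "Tf (compose (carrier G) f g) v = restrict (Tf f) V (restrict (Tf g) V v)"
        using v K2(2)[OF K_N[OF g'] v] by (simp add: Tf_def)
    qed
    then show "Phi (f \<otimes>\<^bsub>?H\<^esub> g) = Phi f \<otimes>\<^bsub>?U\<^esub> Phi g"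
      using Hmult[OF f' g'] by (simp add: units_of_def E_mult)
  qed
  have inj: "inj_on Phi Kset"
  proof (rule inj_onI)
    fix f g assume f: "f \<in> Kset" and g: "g \<in> Kset" and eq: "Phi f = Phi g"
    show "f = g"
    proof
      fix z show "f z = g z"
      proof (cases "z \<in> carrier G")
        case True
        obtain v x where z: "z = (v,x)" using prod.exhaust by blast
        have vx: "v \<in> V" "x \<in> carrier D" using True z by (auto simp: G_carrier)
        have "Tf f v = Tf g v" using fun_cong[OF eq, of v] vx by (simp add: Phi_def)
        moreover have "f z = (Tf f v, x)" using K3[OF K_N[OF f] vx] K_sig[OF f vx(2)] z by simp
        moreover have "g z = (Tf g v, x)" using K3[OF K_N[OF g] vx] K_sig[OF g vx(2)] z by simp
        ultimately show ?thesis by simp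
      next
        case False
        then show ?thesis using extensional_arb[OF fext[OF K_N[OF f]] False] extensional_arb[OF fext[OF K_N[OF g]] False] by simp
      qed
    qed
  qed
  have surj: "Units (End_ring p d D \<psi>) \<subseteq> Phi ` Kset"
  proof
    fix T assume T: "T \<in> Units (End_ring p d D \<psi>)"
    then obtain S where TE: "T \<in> carrier (End_ring p d D \<psi>)" and SE: "S \<in> carrier (End_ring p d D \<psi>)"
      and ST: "compose V S T = (\<lambda>v\<in>V. v)" and TS: "compose V T S = (\<lambda>v\<in>V. v)"
      using T unfolding Units_def E_mult E_one by blast
    have Tl: "Fp_linear p d T" and Tc: "\<And>x v. x \<in> carrier D \<Longrightarrow> v \<in> V \<Longrightarrow> T (\<psi> x v) = \<psi> x (T v)"
      and Text: "T \<in> extensional V" using TE by (auto simp: E_carrier)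
    have SV: "v \<in> V \<Longrightarrow> S v \<in> V" for v using SE by (auto simp: E_carrier Fp_linear_def)
    have TV: "v \<in> V \<Longrightarrow> T v \<in> V" for v using Tl by (auto simp: Fp_linear_def)
    have STv: "v \<in> V \<Longrightarrow> S (T v) = v" for v using fun_cong[OF ST, of v] by (simp add: compose_def)
    have TSv: "v \<in> V \<Longrightarrow> T (S v) = v" for v using fun_cong[OF TS, of v] by (simp add: compose_def)
    have Tb: "bij_betw T V V"
    proof -
      have "inj_on T V" by (metis STv inj_onI)
      moreover have "T ` V = V"
      proof
        show "T ` V \<subseteq> V" using TV by blast
        show "V \<subseteq> T ` V" using TSv SV by (metis image_eqI subsetI)
      qed
      ultimately show ?thesis by (simp add: bij_betw_def)
    qed
    let ?i = "\<lambda>x\<in>carrier D. x"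
    have iA: "?i \<in> auto D" using group.id_in_auto[OF grpD] .
    have Tc': "T (\<psi> x w) = \<psi> (?i x) (T w)" if "x \<in> carrier D" "w \<in> V" for x w using Tc that by simp
    have FN: "mkf T ?i \<in> normaliser_D p d D \<psi>" using mkf_N[OF Tb Tl iA Tc'] .
    have Fk: "kappa D (mkf T ?i) = \<one>\<^bsub>AutoGroup D\<^esub>" unfolding AutoD_one by (rule mkf_kappa[OF Tb Tl iA Tc'])
    have "Phi (mkf T ?i) = T"
    proof
      fix v show "Phi (mkf T ?i) v = T v"
      proof (cases "v \<in> V")
        case True
        have "Phi (mkf T ?i) v = Tf (mkf T ?i) v" using True by (simp add: Phi_def)
        also have "\<dots> = T v" by (rule mkf_Tf[OF Tb Tl iA Tc' True])
        finally show ?thesis .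
      next
        case False then show ?thesis using extensional_arb[OF Text False] by (simp add: Phi_def)
      qed
    qed
    moreover have "mkf T ?i \<in> Kset" using FN Fk by (simp add: Kset_def)
    ultimately show "T \<in> Phi ` Kset" by (rule image_eqI[OF sym])
  qed
  have "bij_betw Phi Kset (Units (End_ring p d D \<psi>))"
    using inj surj Phi_E unfolding bij_betw_def by blast
  then show "Phi \<in> iso ?H ?U" using hom by (simp add: iso_def units_of_def)
qed

end

lemma cop_aux:
  fixes p :: int and r :: nat
  assumes "Factorial_Ring.prime p" "odd p" "\<not> p dvd int r"
  shows "coprime (nat p) (2 * r)"
proof -
  have p1: "p > 1" using assms(1) by (simp add: prime_gt_1_int)
  have "\<not> p dvd 2"
  proof
    assume "p dvd 2" then have "p \<le> 2" by (simp add: zdvd_imp_le)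
    then have "p = 2" using p1 by simp
    then show False using assms(2) by simp
  qed
  then have "\<not> p dvd 2 * int r" using assms(1,3) by (simp add: prime_dvd_mult_iff)
  then have "coprime p (2 * int r)" using assms(1) prime_imp_coprime by blast
  moreover have "p = int (nat p)" using p1 by simp
  ultimately have "coprime (int (nat p)) (int (2 * r))" by simp
  then show ?thesis by (simp only: coprime_int_iff)
qed

theorem lemma5p3:
  fixes p :: int and r d :: nat
    and \<psi> :: "nat \<times> bool \<Rightarrow> (nat \<Rightarrow> int) \<Rightarrow> (nat \<Rightarrow> int)"
  defines "D \<equiv> dihedral_group r"
  defines "G \<equiv> sdprod p d D \<psi>"
  defines "N \<equiv> normaliser_D p d D \<psi>"
  assumes "Factorial_Ring.prime p" and "odd p"
    and "r \<ge> 3" and "\<not> p dvd int r"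
    and "\<psi> \<in> hom D (GL_group p d)"
    and "irreducible_rep p d D \<psi>"
    and "\<not> trivial_rep p d D \<psi>"
  shows "(AutoGroup G)\<lparr>carrier := {f \<in> N. kappa D f = \<one>\<^bsub>AutoGroup D\<^esub>}\<rparr>
           \<cong> units_of (End_ring p d D \<psi>)
         \<and> kappa D ` N = {\<sigma> \<in> auto D. rep_iso p d D (\<psi> \<circ> \<sigma>) \<psi>}"
proof -
  interpret LS p d r \<psi>
  proof
    show "p > 1" using assms(4) by (simp add: prime_gt_1_int)
    show "r > 0" using assms(6) by simp
    show "coprime (nat p) (2 * r)" using cop_aux assms(4,5,7) by blast
    show "\<psi> \<in> hom (dihedral_group r) (GL_group p d)" using assms(8) by (simp add: D_def)
  qed
  show ?thesis using kernel_part image_part unfolding Kset_def D_def G_def N_def by simp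
qed

end
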